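(* Let $\Sigma\subset\mathbb R^d$ be a bounded open set containing $0$. Then: (a) for each $x\in\mathbb R^d\setminus\{0\}$ the limit $R_\Sigma(x):=\lim_{\varepsilon\searrow0}\big(\int_\varepsilon^{+\infty}\frac{d\mu}{\mu}1_\Sigma(\mu x)+\ln\varepsilon\big)$ exists; (b) the even function $G_\Sigma:\mathbb R^d\setminus\{0\}\to\mathbb R$, $G_\Sigma(x)=\tfrac12[R_\Sigma(x)+R_\Sigma(-x)]$, satisfies $G_\Sigma(x)=G_\Sigma\big(\frac{x}{|x|}\big)-\ln|x|$; (c) if $\Sigma$ is star-shaped with respect to $0$, then $G_\Sigma(\omega)=\tfrac12[\ln\ell_\Sigma(\omega)+\ln\ell_\Sigma(-\omega)]$ for each $\omega\in S^{d-1}$.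
   Context: $1_\Sigma$ is the characteristic function of $\Sigma$. For an open set $\Sigma$ star-shaped with respect to $0$, $\ell_\Sigma:S^{d-1}\to\,]0,\infty[$ is defined by $\ell_\Sigma(\omega)=\sup\{\mu\ge0:\mu\omega\in\Sigma\}$. *)

theory Defs
  imports "HOL-Analysis.Analysis"
begin

definition trunc_int :: "'a::euclidean_space set \<Rightarrow> 'a \<Rightarrow> real \<Rightarrow> real" where
  "trunc_int S x \<epsilon> = integral {\<epsilon>..} (\<lambda>\<mu>. indicator S (\<mu> *\<^sub>R x) / \<mu>) + ln \<epsilon>"

definition R_Sigma :: "'a::euclidean_space set \<Rightarrow> 'a \<Rightarrow> real" where
  "R_Sigma S x = Lim (at_right 0) (trunc_int S x)"

definition G_Sigma :: "'a::euclidean_space set \<Rightarrow> 'a \<Rightarrow> real" where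
  "G_Sigma S x = (R_Sigma S x + R_Sigma S (- x)) / 2"

definition ell_Sigma :: "'a::real_vector set \<Rightarrow> 'a \<Rightarrow> real" where
  "ell_Sigma S \<omega> = Sup {\<mu>. \<mu> \<ge> 0 \<and> \<mu> *\<^sub>R \<omega> \<in> S}"

definition star_shaped_0 :: "'a::real_vector set \<Rightarrow> bool" where
  "star_shaped_0 S \<longleftrightarrow> (\<forall>x\<in>S. closed_segment 0 x \<subseteq> S)"

end

theory Submission
  imports Defs
begin

lemma meas_f:
  fixes S :: "'a::euclidean_space set"
  assumes "open S"
  shows "(\<lambda>\<mu>::real. indicator S (\<mu> *\<^sub>R x) / \<mu>) \<in> borel_measurable (lebesgue_on T)"
proof -
  have "S \<in> sets borel" using assms by simp
  have "(\<lambda>\<mu>::real. \<mu> *\<^sub>R x) \<in> borel_measurable borel"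
    by (intro borel_measurable_continuous_onI continuous_intros)
  then have "(\<lambda>\<mu>::real. indicator S (\<mu> *\<^sub>R x) :: real) \<in> borel_measurable borel"
    using \<open>S \<in> sets borel\<close> by (simp add: borel_measurable_indicator')
  then have "(\<lambda>\<mu>::real. indicator S (\<mu> *\<^sub>R x) / \<mu>) \<in> borel_measurable borel" by measurable
  then show ?thesis
    by (metis (mono_tags, lifting) measurable_completion measurable_lborel2
    measurable_restrict_space1)
qed

lemma int_ab:
  fixes S :: "'a::euclidean_space set"
  assumes "open S" "0 < a"
  shows "(\<lambda>\<mu>::real. indicator S (\<mu> *\<^sub>R x) / \<mu>) integrable_on {a..b}"
proof (rule measurable_bounded_by_integrable_imp_integrable[where g="\<lambda>_. 1/a"])
  show "(\<lambda>\<mu>::real. indicator S (\<mu> *\<^sub>R x) / \<mu>) \<in> borel_measurable (lebesgue_on {a..b})"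
    using meas_f[OF assms(1)] .
  show "(\<lambda>_. 1/a) integrable_on {a..b}" by (intro integrable_continuous_interval continuous_on_const)
  show "{a..b} \<in> sets lebesgue" by simp
  fix \<mu> assume "\<mu> \<in> {a..b}"
  then have "a \<le> \<mu>" by simp
  have "norm (indicator S (\<mu> *\<^sub>R x) / \<mu> :: real) \<le> 1 / \<mu>"
    using \<open>a \<le> \<mu>\<close> assms(2) by (auto simp: indicator_def)
  also have "\<dots> \<le> 1 / a" using \<open>a \<le> \<mu>\<close> assms(2) by (simp add: frac_le)
  finally show "norm (indicator S (\<mu> *\<^sub>R x) / \<mu> :: real) \<le> 1 / a" .
qed

lemma vanish:
  fixes S :: "'a::euclidean_space set"
  assumes "bounded S" "x \<noteq> 0"
  shows "\<exists>T>0. \<forall>\<mu>\<ge>T. indicator S (\<mu> *\<^sub>R x) = (0::real)"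
proof -
  obtain B where B: "\<forall>y\<in>S. norm y \<le> B" using assms(1) bounded_iff by blast
  define T where "T = (\<bar>B\<bar> + 1) / norm x"
  have nx: "norm x > 0" using assms(2) by simp
  have "T > 0" unfolding T_def using nx by simp
  moreover have "indicator S (\<mu> *\<^sub>R x) = (0::real)" if "\<mu> \<ge> T" for \<mu>
  proof -
    have "\<mu> * norm x \<ge> T * norm x" using that nx by (simp add: mult_right_mono)
    also have "T * norm x = \<bar>B\<bar> + 1" unfolding T_def using nx by simp
    finally have "norm (\<mu> *\<^sub>R x) > B" using \<open>T > 0\<close> that by auto
    then show ?thesis using B by (auto simp: indicator_def)
  qed
  ultimately show ?thesis by blast
qed

lemma tail:
  fixes f :: "real \<Rightarrow> real"
  assumes "(f has_integral I) {a..b}" "a \<le> b" "\<forall>\<mu>\<ge>b. f \<mu> = 0"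
  shows "(f has_integral I) {a..}"
proof -
  have "((\<lambda>x. if x \<in> {a..b} then f x else 0) has_integral I) {a..}"
    using assms(1) by (subst has_integral_restrict) auto
  then show ?thesis
    by (rule has_integral_cong[THEN iffD1, rotated]) (use assms(3) in auto)
qed

lemma logpart:
  fixes S :: "'a::euclidean_space set"
  assumes "0 < a" "a \<le> b" "\<forall>\<mu>. a \<le> \<mu> \<and> \<mu> < b \<longrightarrow> \<mu> *\<^sub>R x \<in> S"
  shows "((\<lambda>\<mu>::real. indicator S (\<mu> *\<^sub>R x) / \<mu>) has_integral (ln b - ln a)) {a..b}"
proof -
  have "((\<lambda>\<mu>. 1 / \<mu>) has_integral (ln b - ln a)) {a..b}"
  proof (rule fundamental_theorem_of_calculus[OF assms(2)])
    fix \<mu> assume "\<mu> \<in> {a..b}"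
    then have "\<mu> > 0" using assms by auto
    then have "(ln has_real_derivative inverse \<mu>) (at \<mu> within {a..b})"
      by (intro DERIV_ln has_field_derivative_at_within)
    then show "(ln has_vector_derivative 1 / \<mu>) (at \<mu> within {a..b})"
      by (simp add: has_real_derivative_iff_has_vector_derivative divide_inverse)
  qed
  moreover have "\<And>\<mu>. \<mu> \<in> {a..b} - {b} \<Longrightarrow> indicator S (\<mu> *\<^sub>R x) / \<mu> = 1 / \<mu>"
    using assms(3) by (auto simp: indicator_def)
  ultimately show ?thesis
    using has_integral_spike_finite_eq[of "{b}" "{a..b}" "\<lambda>\<mu>. indicator S (\<mu> *\<^sub>R x) / \<mu>" "\<lambda>\<mu>. 1 / \<mu>"]
    by auto
qed


lemma tail_int:
  fixes S :: "'a::euclidean_space set"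
  assumes "open S" "bounded S" "x \<noteq> 0" "0 < c"
  shows "\<exists>T\<ge>c. ((\<lambda>\<mu>::real. indicator S (\<mu> *\<^sub>R x) / \<mu>) has_integral
            integral {c..T} (\<lambda>\<mu>::real. indicator S (\<mu> *\<^sub>R x) / \<mu>)) {c..}
          \<and> (\<forall>\<mu>\<ge>T. indicator S (\<mu> *\<^sub>R x) = (0::real))"
proof -
  obtain T where T: "T > 0" "\<forall>\<mu>\<ge>T. indicator S (\<mu> *\<^sub>R x) = (0::real)"
    using vanish[OF assms(2,3)] by blast
  define T' where "T' = max T c"
  have "T' \<ge> c" "\<forall>\<mu>\<ge>T'. indicator S (\<mu> *\<^sub>R x) = (0::real)" using T unfolding T'_def by auto
  moreover have "((\<lambda>\<mu>::real. indicator S (\<mu> *\<^sub>R x) / \<mu>) has_integral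
            integral {c..T'} (\<lambda>\<mu>::real. indicator S (\<mu> *\<^sub>R x) / \<mu>)) {c..}"
    by (rule tail) (use int_ab[OF assms(1,4)] calculation in auto)
  ultimately show ?thesis by blast
qed

lemma per_x:
  fixes S :: "'a::euclidean_space set"
  assumes "open S" "bounded S" "ball 0 r \<subseteq> S" "x \<noteq> 0" "0 < b" "b * norm x < r"
  shows "(\<forall>\<epsilon>>0. (\<lambda>\<mu>. indicator S (\<mu> *\<^sub>R x) / \<mu>) integrable_on {\<epsilon>..})"
    and "\<forall>\<epsilon>. 0 < \<epsilon> \<and> \<epsilon> \<le> b \<longrightarrow> trunc_int S x \<epsilon> = ln b + integral {b..} (\<lambda>\<mu>. indicator S (\<mu> *\<^sub>R x) / \<mu>)"
    and "R_Sigma S x = ln b + integral {b..} (\<lambda>\<mu>. indicator S (\<mu> *\<^sub>R x) / \<mu>)"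
proof -
  let ?F = "\<lambda>\<mu>::real. indicator S (\<mu> *\<^sub>R x) / \<mu>"
  show I: "\<forall>\<epsilon>>0. ?F integrable_on {\<epsilon>..}"
    using tail_int[OF assms(1,2,4)] by blast
  show E: "\<forall>\<epsilon>. 0 < \<epsilon> \<and> \<epsilon> \<le> b \<longrightarrow> trunc_int S x \<epsilon> = ln b + integral {b..} ?F"
  proof (intro allI impI)
    fix \<epsilon> :: real assume e: "0 < \<epsilon> \<and> \<epsilon> \<le> b"
    obtain T where T: "T \<ge> b" "(?F has_integral integral {b..T} ?F) {b..}"
        "\<forall>\<mu>\<ge>T. indicator S (\<mu> *\<^sub>R x) = (0::real)"
      using tail_int[OF assms(1,2,4,5)] by blast
    have "(?F has_integral integral {\<epsilon>..T} ?F) {\<epsilon>..}"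
      by (rule tail) (use int_ab[OF assms(1)] e T in auto)
    then have i1: "integral {\<epsilon>..} ?F = integral {\<epsilon>..T} ?F" by (simp add: integral_unique)
    have i2: "integral {b..} ?F = integral {b..T} ?F" using T(2) by (simp add: integral_unique)
    have "integral {\<epsilon>..T} ?F = integral {\<epsilon>..b} ?F + integral {b..T} ?F"
      using Henstock_Kurzweil_Integration.integral_combine[where a=\<epsilon> and c=b and b=T and f="?F"] int_ab[OF assms(1)] e T by auto
    moreover have "(?F has_integral (ln b - ln \<epsilon>)) {\<epsilon>..b}"
    proof (rule logpart)
      show "\<forall>\<mu>. \<epsilon> \<le> \<mu> \<and> \<mu> < b \<longrightarrow> \<mu> *\<^sub>R x \<in> S"
      proof (intro allI impI)
        fix \<mu> assume m: "\<epsilon> \<le> \<mu> \<and> \<mu> < b"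
        have "norm (\<mu> *\<^sub>R x) = \<mu> * norm x" using m e by simp
        also have "\<dots> \<le> b * norm x" using m by (simp add: mult_right_mono)
        finally have "\<mu> *\<^sub>R x \<in> ball 0 r" using assms(6) by simp
        then show "\<mu> *\<^sub>R x \<in> S" using assms(3) by blast
      qed
    qed (use e in auto)
    ultimately show "trunc_int S x \<epsilon> = ln b + integral {b..} ?F"
      unfolding trunc_int_def using i1 i2 by (simp add: integral_unique)
  qed
  have "eventually (\<lambda>\<epsilon>. trunc_int S x \<epsilon> = ln b + integral {b..} ?F) (at_right 0)"
    unfolding eventually_at_right[OF assms(5)] using E assms(5) by auto
  then have "(trunc_int S x \<longlongrightarrow> ln b + integral {b..} ?F) (at_right 0)"
    by (rule tendsto_eventually)
  then show "R_Sigma S x = ln b + integral {b..} ?F"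
    unfolding R_Sigma_def by (simp add: tendsto_Lim)
qed


lemma scale_int:
  fixes S :: "'a::euclidean_space set"
  assumes "open S" "bounded S" "x \<noteq> 0" "0 < b"
  shows "integral {b / norm x..} (\<lambda>\<mu>. indicator S (\<mu> *\<^sub>R x) / \<mu>)
       = integral {b..} (\<lambda>\<mu>. indicator S (\<mu> *\<^sub>R (x /\<^sub>R norm x)) / \<mu>)"
proof -
  define s where "s = norm x"
  define \<omega> where "\<omega> = x /\<^sub>R s"
  have s: "s > 0" using assms(3) unfolding s_def by simp
  have x: "x = s *\<^sub>R \<omega>" unfolding \<omega>_def using s by simp
  have \<omega>0: "\<omega> \<noteq> 0" using x assms(3) by auto
  let ?G = "\<lambda>\<mu>::real. indicator S (\<mu> *\<^sub>R \<omega>) / \<mu>"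
  let ?F = "\<lambda>\<mu>::real. indicator S (\<mu> *\<^sub>R x) / \<mu>"
  obtain T where T: "T \<ge> b" "(?G has_integral integral {b..T} ?G) {b..}"
      "\<forall>\<mu>\<ge>T. indicator S (\<mu> *\<^sub>R \<omega>) = (0::real)"
    using tail_int[OF assms(1,2) \<omega>0 assms(4)] by blast
  define I where "I = integral {b..T} ?G"
  have GI: "(?G has_integral I) {b..T}"
    unfolding I_def using int_ab[OF assms(1,4)] by (simp add: has_integral_integral)
  have h1: "((\<lambda>\<mu>. ?G (s * \<mu>)) has_integral I / s) ((\<lambda>\<nu>. \<nu> / s) ` {b..T})"
    using has_integral_stretch_real_iff[of s ?G "I / s" b T] s GI by simp
  have h2: "(\<lambda>\<nu>. \<nu> / s) ` {b..T} = {b/s..T/s}"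
    using s by simp
  have h3: "((\<lambda>\<mu>. ?G (s * \<mu>)) has_integral I / s) {b/s..T/s}"
    using h1 unfolding h2 .
  have h4: "((\<lambda>\<mu>. s * ?G (s * \<mu>)) has_integral s * (I / s)) {b/s..T/s}"
    by (rule has_integral_mult_right[OF h3])
  have h5: "(\<lambda>\<mu>. s * ?G (s * \<mu>)) = ?F"
  proof
    fix \<mu> :: real
    have "(s * \<mu>) *\<^sub>R \<omega> = \<mu> *\<^sub>R x" by (simp add: x)
    then show "s * ?G (s * \<mu>) = ?F \<mu>" using s by simp
  qed
  have h6: "s * (I / s) = I" using s by simp
  have "(?F has_integral I) {b/s..T/s}" using h4 unfolding h5 h6 .
  then have "(?F has_integral I) {b/s..}"
  proof (rule tail)
    show "b / s \<le> T / s" using T s by (simp add: divide_right_mono)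
    show "\<forall>\<mu>\<ge>T / s. ?F \<mu> = 0"
    proof (intro allI impI)
      fix \<mu> assume "\<mu> \<ge> T / s"
      then have "s * \<mu> \<ge> T" using s by (simp add: field_simps)
      moreover have "(s * \<mu>) *\<^sub>R \<omega> = \<mu> *\<^sub>R x" by (simp add: x)
      ultimately have "indicator S (\<mu> *\<^sub>R x) = (0::real)" using T(3) by metis
      then show "?F \<mu> = 0" by simp
    qed
  qed
  then show ?thesis using T(2) unfolding s_def[symmetric] \<omega>_def[symmetric] I_def
    by (simp add: integral_unique)
qed


lemma R_scale:
  fixes S :: "'a::euclidean_space set"
  assumes "open S" "bounded S" "ball 0 r \<subseteq> S" "0 < r" "x \<noteq> 0"
  shows "R_Sigma S x = R_Sigma S (x /\<^sub>R norm x) - ln (norm x)"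
proof -
  define s where "s = norm x"
  have s: "s > 0" using assms(5) unfolding s_def by simp
  define b where "b = r / 2"
  have b: "b > 0" "b < r" using assms(4) unfolding b_def by auto
  have w0: "x /\<^sub>R norm x \<noteq> 0" using assms(5) by simp
  have nw: "norm (x /\<^sub>R norm x) = 1" using assms(5) by simp
  have Rw: "R_Sigma S (x /\<^sub>R norm x) = ln b + integral {b..} (\<lambda>\<mu>. indicator S (\<mu> *\<^sub>R (x /\<^sub>R norm x)) / \<mu>)"
    by (rule per_x(3)[OF assms(1,2,3) w0 b(1)]) (use b nw in simp)
  have bs: "b / s > 0" using b s by simp
  have Rx: "R_Sigma S x = ln (b / s) + integral {b / s..} (\<lambda>\<mu>. indicator S (\<mu> *\<^sub>R x) / \<mu>)"
    by (rule per_x(3)[OF assms(1,2,3,5) bs]) (use b s in \<open>simp add: s_def\<close>)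
  have "ln (b / s) = ln b - ln s" using b s by (simp add: ln_div)
  then show ?thesis using Rx Rw scale_int[OF assms(1,2,5) b(1)] unfolding s_def by simp
qed

lemma ell_prop:
  fixes S :: "'a::euclidean_space set"
  assumes "open S" "bounded S" "star_shaped_0 S" "ball 0 r \<subseteq> S" "0 < r" "norm \<omega> = 1"
  shows "0 < ell_Sigma S \<omega>" "\<forall>\<mu>\<ge>0. \<mu> *\<^sub>R \<omega> \<in> S \<longleftrightarrow> \<mu> < ell_Sigma S \<omega>"
proof -
  define A where "A = {\<mu>. \<mu> \<ge> 0 \<and> \<mu> *\<^sub>R \<omega> \<in> S}"
  have l: "ell_Sigma S \<omega> = Sup A" unfolding ell_Sigma_def A_def ..
  obtain B where B: "\<forall>y\<in>S. norm y \<le> B" using assms(2) bounded_iff by blast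
  have bdd: "bdd_above A"
  proof
    fix \<mu> assume "\<mu> \<in> A"
    then have "norm (\<mu> *\<^sub>R \<omega>) \<le> B" "\<mu> \<ge> 0" using B unfolding A_def by auto
    then show "\<mu> \<le> B" using assms(6) by simp
  qed
  have rA: "r / 2 \<in> A" unfolding A_def using assms(4,5,6) by auto
  have pos: "0 < Sup A"
    using cSup_upper[OF rA bdd] assms(5) by linarith
  show "0 < ell_Sigma S \<omega>" using pos l by simp
  show "\<forall>\<mu>\<ge>0. \<mu> *\<^sub>R \<omega> \<in> S \<longleftrightarrow> \<mu> < ell_Sigma S \<omega>"
  proof (intro allI impI iffI)
    fix \<mu> :: real assume m: "\<mu> \<ge> 0" "\<mu> *\<^sub>R \<omega> \<in> S"
    obtain e where e: "e > 0" "ball (\<mu> *\<^sub>R \<omega>) e \<subseteq> S"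
      using assms(1) m(2) open_contains_ball by blast
    have "(\<mu> + e/2) *\<^sub>R \<omega> \<in> ball (\<mu> *\<^sub>R \<omega>) e"
      using e assms(6) by (simp add: dist_norm algebra_simps)
    then have "\<mu> + e/2 \<in> A" unfolding A_def using e m by auto
    then have "\<mu> + e/2 \<le> Sup A" using cSup_upper bdd by blast
    then show "\<mu> < ell_Sigma S \<omega>" using l e by simp
  next
    fix \<mu> :: real assume m: "\<mu> \<ge> 0" "\<mu> < ell_Sigma S \<omega>"
    then have "\<mu> < Sup A" using l by simp
    then obtain \<nu> where nu: "\<nu> \<in> A" "\<mu> < \<nu>"
      using less_cSup_iff[of A \<mu>] rA bdd by blast
    then have nuS: "\<nu> *\<^sub>R \<omega> \<in> S" "\<nu> > 0" using m unfolding A_def by auto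
    have "\<mu> *\<^sub>R \<omega> \<in> closed_segment 0 (\<nu> *\<^sub>R \<omega>)"
      unfolding in_segment
      by (rule exI[where x="\<mu> / \<nu>"]) (use m nu nuS in auto)
    then show "\<mu> *\<^sub>R \<omega> \<in> S" using assms(3) nuS unfolding star_shaped_0_def by blast
  qed
qed

theorem mainTheorem4:
  fixes \<Sigma> :: "'a::euclidean_space set"
  assumes "bounded \<Sigma>" and "open \<Sigma>" and "0 \<in> \<Sigma>"
  shows "(\<forall>x. x \<noteq> 0 \<longrightarrow>
            (\<forall>\<epsilon>>0. (\<lambda>\<mu>. indicator \<Sigma> (\<mu> *\<^sub>R x) / \<mu>) integrable_on {\<epsilon>..}) \<and>
            (\<exists>L. (trunc_int \<Sigma> x \<longlongrightarrow> L) (at_right 0)))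
       \<and> (\<forall>x. x \<noteq> 0 \<longrightarrow> G_Sigma \<Sigma> (- x) = G_Sigma \<Sigma> x \<and>
              G_Sigma \<Sigma> x = G_Sigma \<Sigma> (x /\<^sub>R norm x) - ln (norm x))
       \<and> (star_shaped_0 \<Sigma> \<longrightarrow>
            (\<forall>\<omega>\<in>sphere 0 1. G_Sigma \<Sigma> \<omega> = (ln (ell_Sigma \<Sigma> \<omega>) + ln (ell_Sigma \<Sigma> (- \<omega>))) / 2))"
proof -
  obtain r where r: "r > 0" "ball 0 r \<subseteq> \<Sigma>"
    using assms(2,3) open_contains_ball by blast
  have PA: "(\<forall>\<epsilon>>0. (\<lambda>\<mu>. indicator \<Sigma> (\<mu> *\<^sub>R x) / \<mu>) integrable_on {\<epsilon>..}) \<and>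
            (\<exists>L. (trunc_int \<Sigma> x \<longlongrightarrow> L) (at_right 0))" if x: "x \<noteq> 0" for x
  proof -
    define b where "b = r / (2 * norm x)"
    have b: "b > 0" "b * norm x < r" using r x unfolding b_def by auto
    note P = per_x[OF assms(2,1) r(2) x b]

    have "eventually (\<lambda>\<epsilon>. trunc_int \<Sigma> x \<epsilon> = ln b + integral {b..} (\<lambda>\<mu>. indicator \<Sigma> (\<mu> *\<^sub>R x) / \<mu>)) (at_right 0)"
      unfolding eventually_at_right[OF b(1)] using P(2) b(1) by auto
    then have "\<exists>L. (trunc_int \<Sigma> x \<longlongrightarrow> L) (at_right 0)"
      using tendsto_eventually by blast
    then show ?thesis using P(1) by blast
  qed
  have PB: "G_Sigma \<Sigma> (- x) = G_Sigma \<Sigma> x \<and>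
              G_Sigma \<Sigma> x = G_Sigma \<Sigma> (x /\<^sub>R norm x) - ln (norm x)" if x: "x \<noteq> 0" for x
  proof
    show "G_Sigma \<Sigma> (- x) = G_Sigma \<Sigma> x" unfolding G_Sigma_def by simp
    have mx: "- x \<noteq> 0" using x by simp
    have "R_Sigma \<Sigma> x = R_Sigma \<Sigma> (x /\<^sub>R norm x) - ln (norm x)"
      by (rule R_scale[OF assms(2,1) r(2,1) x])
    moreover have "R_Sigma \<Sigma> (- x) = R_Sigma \<Sigma> (- (x /\<^sub>R norm x)) - ln (norm x)"
      using R_scale[OF assms(2,1) r(2,1) mx] by simp
    ultimately show "G_Sigma \<Sigma> x = G_Sigma \<Sigma> (x /\<^sub>R norm x) - ln (norm x)"
      unfolding G_Sigma_def by (simp add: field_simps)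
  qed
  have PC: "G_Sigma \<Sigma> \<omega> = (ln (ell_Sigma \<Sigma> \<omega>) + ln (ell_Sigma \<Sigma> (- \<omega>))) / 2"
    if st: "star_shaped_0 \<Sigma>" and w: "\<omega> \<in> sphere 0 1" for \<omega>
  proof -
    have Rl: "R_Sigma \<Sigma> v = ln (ell_Sigma \<Sigma> v)" if nv: "norm v = 1" for v :: 'a
    proof -
      note E = ell_prop[OF assms(2,1) st r(2,1) nv]
      define l where "l = ell_Sigma \<Sigma> v"
      define b where "b = min (r/2) (l/2)"
      have l: "l > 0" "\<forall>\<mu>\<ge>0. \<mu> *\<^sub>R v \<in> \<Sigma> \<longleftrightarrow> \<mu> < l" using E unfolding l_def by auto
      have b: "b > 0" "b * norm v < r" "b \<le> l" using r l unfolding b_def nv by auto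
      have v0: "v \<noteq> 0" using nv by auto
      have R: "R_Sigma \<Sigma> v = ln b + integral {b..} (\<lambda>\<mu>. indicator \<Sigma> (\<mu> *\<^sub>R v) / \<mu>)"
        using per_x(3)[OF assms(2,1) r(2) v0 b(1,2)] .
      have "((\<lambda>\<mu>. indicator \<Sigma> (\<mu> *\<^sub>R v) / \<mu>) has_integral (ln l - ln b)) {b..l}"
        by (rule logpart) (use b l in auto)
      then have "((\<lambda>\<mu>. indicator \<Sigma> (\<mu> *\<^sub>R v) / \<mu>) has_integral (ln l - ln b)) {b..}"
        by (rule tail) (use b l in \<open>auto simp: indicator_def\<close>)
      then show ?thesis using R unfolding l_def[symmetric] by (simp add: integral_unique)
    qed
    have n1: "norm \<omega> = 1" "norm (- \<omega>) = 1" using w by auto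
    show "G_Sigma \<Sigma> \<omega> = (ln (ell_Sigma \<Sigma> \<omega>) + ln (ell_Sigma \<Sigma> (- \<omega>))) / 2"
      unfolding G_Sigma_def using Rl[OF n1(1)] Rl[OF n1(2)] by simp
  qed
  show ?thesis using PA PB PC by blast
qed

end
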